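(* For any nonzero circulant matrix $A\in\mathbb{R}_+^{n\times n}$, the sequence $\{(A/\lambda(A))^t\}_{t\ge1}$ of max-algebraic powers is ultimately periodic, and its transient satisfies $T(A)\le (n-1)^2+1$.
   Context: Max algebra on $\mathbb{R}_+$ with $\oplus=\max$ and ordinary product; $A^t$ is the max-algebraic power. A circulant matrix $\mathrm{Circ}(a_0,\dots,a_{n-1})$ has $A_{i,j}=a_t$ with $t\equiv j-i\pmod n$, $t\in\{0,\dots,n-1\}$. $\lambda(A)$ is the greatest max-algebraic eigenvalue (maximum cycle geometric mean). A sequence $\{\alpha_t\}$ is ultimately periodic if there are $T,\sigma$ with $\alpha_{t+\sigma}=\alpha_t$ for all $t\ge T$; the least such $T$ is the transient, denoted $T(A)$ for the sequence $\{(A/\lambda(A))^t\}$. *)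

theory Defs
  imports Complex_Main
begin

text \<open>n x n matrices over R_+ are represented as functions nat => nat => real;
  only the entries with indices < n are meaningful.\<close>

definition circ :: "nat \<Rightarrow> (nat \<Rightarrow> real) \<Rightarrow> nat \<Rightarrow> nat \<Rightarrow> real" where
  "circ n a i j = a ((j + n - i) mod n)"

definition mp_mult :: "nat \<Rightarrow> (nat \<Rightarrow> nat \<Rightarrow> real) \<Rightarrow> (nat \<Rightarrow> nat \<Rightarrow> real) \<Rightarrow> nat \<Rightarrow> nat \<Rightarrow> real" where
  "mp_mult n A B i j = Max ((\<lambda>k. A i k * B k j) ` {..<n})"

fun mp_pow :: "nat \<Rightarrow> (nat \<Rightarrow> nat \<Rightarrow> real) \<Rightarrow> nat \<Rightarrow> nat \<Rightarrow> nat \<Rightarrow> real" where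
  "mp_pow n A 0 = (\<lambda>i j. if i = j then 1 else 0)"
| "mp_pow n A (Suc t) = mp_mult n (mp_pow n A t) A"

definition cycle_gmean :: "(nat \<Rightarrow> nat \<Rightarrow> real) \<Rightarrow> nat list \<Rightarrow> real" where
  "cycle_gmean A xs = root (length xs)
     (\<Prod>i<length xs. A (xs ! i) (xs ! ((i + 1) mod length xs)))"

definition mp_lambda :: "nat \<Rightarrow> (nat \<Rightarrow> nat \<Rightarrow> real) \<Rightarrow> real" where
  "mp_lambda n A = Max (cycle_gmean A ` {xs. xs \<noteq> [] \<and> distinct xs \<and> set xs \<subseteq> {..<n}})"

definition mat_scale :: "real \<Rightarrow> (nat \<Rightarrow> nat \<Rightarrow> real) \<Rightarrow> nat \<Rightarrow> nat \<Rightarrow> real" where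
  "mat_scale c A i j = c * A i j"

definition normpow :: "nat \<Rightarrow> (nat \<Rightarrow> nat \<Rightarrow> real) \<Rightarrow> nat \<Rightarrow> nat \<Rightarrow> nat \<Rightarrow> real" where
  "normpow n A t = mp_pow n (mat_scale (1 / mp_lambda n A) A) t"

definition periodic_from :: "nat \<Rightarrow> (nat \<Rightarrow> nat \<Rightarrow> real) \<Rightarrow> nat \<Rightarrow> bool" where
  "periodic_from n A T \<longleftrightarrow> T \<ge> 1 \<and> (\<exists>\<sigma>>0. \<forall>t\<ge>T. \<forall>i<n. \<forall>j<n.
      normpow n A (t + \<sigma>) i j = normpow n A t i j)"

definition ult_periodic :: "nat \<Rightarrow> (nat \<Rightarrow> nat \<Rightarrow> real) \<Rightarrow> bool" where
  "ult_periodic n A \<longleftrightarrow> (\<exists>T. periodic_from n A T)"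

definition transient :: "nat \<Rightarrow> (nat \<Rightarrow> nat \<Rightarrow> real) \<Rightarrow> nat" where
  "transient n A = (LEAST T. periodic_from n A T)"

end

theory Submission imports Defs begin
lemma circ_idx: assumes "x < (n::nat)" shows "((x + d) mod n + n - x) mod n = d mod n"
proof -
  have n: "n > 0" using assms by simp
  define r where "r = d mod n"
  have r: "r < n" using n r_def by simp
  have e: "(x + d) mod n = (x + r) mod n" by (simp add: r_def mod_add_right_eq)
  show ?thesis
  proof (cases "x + r < n")
    case True
    then have "(x + r) mod n = x + r" by simp
    then show ?thesis using e r r_def by simp
  next
    case False
    then have "(x + r) mod n = x + r - n" using r assms by (simp add: le_mod_geq)
    then show ?thesis using e r r_def False assms by simp
  qed
qed

lemma m2: assumes "(X + m*((n-1)*s)) mod (n::nat) = 0" "n > 0" shows "X mod n = (m*s) mod n"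
proof -
  have h1: "((X + m*((n-1)*s)) + m*s) mod n = (0 + m*s) mod n"
    using assms(1) by (metis mod_add_left_eq)
  have e2: "X + m*((n-1)*s) + m*s = X + n*(m*s)"
    using assms(2) by (cases n) (auto simp: algebra_simps)
  from h1 have "(X + n*(m*s)) mod n = (m*s) mod n" by (simp only: e2 add_0)
  then show ?thesis by simp
qed

definition wt :: "(nat \<Rightarrow> real) \<Rightarrow> nat list \<Rightarrow> real" where
  "wt c w = prod_list (map c w)"
definition Wd :: "nat \<Rightarrow> nat \<Rightarrow> nat \<Rightarrow> nat \<Rightarrow> nat list set" where
  "Wd n k i j = {w. length w = k \<and> set w \<subseteq> {..<n} \<and> (i + sum_list w) mod n = j}"
definition G :: "nat \<Rightarrow> (nat \<Rightarrow> real) \<Rightarrow> nat \<Rightarrow> nat \<Rightarrow> nat \<Rightarrow> real" where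
  "G n c k i j = Max (insert 0 (wt c ` Wd n k i j))"

lemma wt_append[simp]: "wt c (u @ v) = wt c u * wt c v"
  by (simp add: wt_def)
lemma wt_nonneg: "set w \<subseteq> {..<n} \<Longrightarrow> \<forall>t<n. 0 \<le> c t \<Longrightarrow> 0 \<le> wt c w"
  by (induction w) (auto simp: wt_def)
lemma wt_le1: "set w \<subseteq> {..<n} \<Longrightarrow> \<forall>t<n. 0 \<le> c t \<and> c t \<le> 1 \<Longrightarrow> wt c w \<le> 1"
proof (induction w)
  case Nil then show ?case by (simp add: wt_def)
next
  case (Cons x w)
  then have "wt c w \<le> 1" "0 \<le> wt c w" "0 \<le> c x" "c x \<le> 1"
    using wt_nonneg[of w n c] by auto
  then show ?case by (simp add: wt_def mult_le_one)
qed
lemma finite_Wd: "finite (Wd n k i j)"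
proof -
  have "Wd n k i j \<subseteq> {w. set w \<subseteq> {..<n} \<and> length w = k}" by (auto simp: Wd_def)
  then show ?thesis using finite_lists_length_eq[of "{..<n}" k] finite_subset by blast
qed
lemma Max_cmp:
  assumes "finite A" "finite B" "\<And>x. x \<in> A \<Longrightarrow> \<exists>y\<in>B. f x \<le> g y"
  shows "Max (insert 0 (f ` A)) \<le> Max (insert (0::real) (g ` B))"
proof -
  have fin: "finite (insert (0::real) (g ` B))" using assms(2) by simp
  show ?thesis
  proof (rule Max.boundedI)
    show "finite (insert 0 (f ` A))" using assms(1) by simp
    show "insert 0 (f ` A) \<noteq> {}" by simp
    fix z assume "z \<in> insert 0 (f ` A)"
    then show "z \<le> Max (insert 0 (g ` B))"
    proof
      assume "z = 0" then show ?thesis using fin by (simp add: Max_ge)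
    next
      assume "z \<in> f ` A"
      then obtain x where x: "x \<in> A" "z = f x" by auto
      then obtain y where "y \<in> B" "f x \<le> g y" using assms(3) by blast
      moreover have "g y \<le> Max (insert 0 (g ` B))" using fin \<open>y \<in> B\<close> by (simp add: Max_ge)
      ultimately show ?thesis using x by simp
    qed
  qed
qed
lemma G_nonneg: "0 \<le> G n c k i j"
  unfolding G_def using finite_Wd by (simp add: Max_ge)
lemma G_ge: "w \<in> Wd n k i j \<Longrightarrow> wt c w \<le> G n c k i j"
  unfolding G_def using finite_Wd by (simp add: Max_ge)

lemma powG:
  assumes n: "n > 0" and i: "i < n" and c: "\<forall>t<n. 0 \<le> c t"
  shows "\<forall>j<n. mp_pow n (circ n c) k i j = G n c k i j"
proof (induction k)
  case 0
  show ?case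
  proof (intro allI impI)
    fix j assume j: "j < n"
    have "Wd n 0 i j = (if i = j then {[]} else {})" using i j by (auto simp: Wd_def)
    then show "mp_pow n (circ n c) 0 i j = G n c 0 i j" by (simp add: G_def wt_def)
  qed
next
  case (Suc k)
  show ?case
  proof (intro allI impI)
    fix j assume j: "j < n"
    have fin: "finite ((\<lambda>l. G n c k i l * c ((j + n - l) mod n)) ` {..<n})" by simp
    have ne: "(\<lambda>l. G n c k i l * c ((j + n - l) mod n)) ` {..<n} \<noteq> {}" using n by auto
    have lhs: "mp_pow n (circ n c) (Suc k) i j = Max ((\<lambda>l. G n c k i l * c ((j + n - l) mod n)) ` {..<n})"
    proof -
      have "mp_pow n (circ n c) (Suc k) i j = Max ((\<lambda>l. mp_pow n (circ n c) k i l * circ n c l j) ` {..<n})"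
        by (simp add: mp_mult_def)
      also have "(\<lambda>l. mp_pow n (circ n c) k i l * circ n c l j) ` {..<n} = (\<lambda>l. G n c k i l * c ((j + n - l) mod n)) ` {..<n}"
      proof (intro image_cong refl)
        fix l assume "l \<in> {..<n}"
        then have "mp_pow n (circ n c) k i l = G n c k i l" using Suc.IH by blast
        then show "mp_pow n (circ n c) k i l * circ n c l j = G n c k i l * c ((j + n - l) mod n)"
          by (simp add: circ_def)
      qed
      finally show ?thesis .
    qed
    have le: "Max ((\<lambda>l. G n c k i l * c ((j + n - l) mod n)) ` {..<n}) \<le> G n c (Suc k) i j"
    proof (rule Max.boundedI[OF fin ne])
      fix z assume "z \<in> (\<lambda>l. G n c k i l * c ((j + n - l) mod n)) ` {..<n}"
      then obtain l where l: "l < n" "z = G n c k i l * c ((j + n - l) mod n)" by auto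
      define x where "x = (j + n - l) mod n"
      have x: "x < n" using n x_def by simp
      have "G n c k i l \<in> insert 0 (wt c ` Wd n k i l)"
        unfolding G_def by (rule Max_in) (simp_all add: finite_Wd)
      then show "z \<le> G n c (Suc k) i j"
      proof
        assume "G n c k i l = 0" then show ?thesis using l G_nonneg by simp
      next
        assume "G n c k i l \<in> wt c ` Wd n k i l"
        then obtain w where w: "w \<in> Wd n k i l" "G n c k i l = wt c w" by auto
        have "(i + sum_list w + x) mod n = ((i + sum_list w) mod n + x) mod n"
          by (simp add: mod_add_left_eq)
        also have "\<dots> = (l + (j + n - l) mod n) mod n" using w by (simp add: Wd_def x_def)
        also have "\<dots> = (l + (j + n - l)) mod n" by (simp add: mod_add_right_eq)
        also have "\<dots> = j" using l j by simp
        finally have "w @ [x] \<in> Wd n (Suc k) i j" using w x by (auto simp: Wd_def add.assoc)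
        then have "wt c (w @ [x]) \<le> G n c (Suc k) i j" by (rule G_ge)
        then show ?thesis using w l by (simp add: x_def wt_def)
      qed
    qed
    have ge: "G n c (Suc k) i j \<le> Max ((\<lambda>l. G n c k i l * c ((j + n - l) mod n)) ` {..<n})"
      unfolding G_def[of n c "Suc k" i j]
    proof (rule Max.boundedI)
      show "finite (insert 0 (wt c ` Wd n (Suc k) i j))" by (simp add: finite_Wd)
      show "insert 0 (wt c ` Wd n (Suc k) i j) \<noteq> {}" by simp
      fix z assume "z \<in> insert 0 (wt c ` Wd n (Suc k) i j)"
      then show "z \<le> Max ((\<lambda>l. G n c k i l * c ((j + n - l) mod n)) ` {..<n})"
      proof
        assume z: "z = 0"
        have "0 \<le> G n c k i 0 * c ((j + n - 0) mod n)"
          using G_nonneg c n by (simp add: mult_nonneg_nonneg)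
        also have "\<dots> \<le> Max ((\<lambda>l. G n c k i l * c ((j + n - l) mod n)) ` {..<n})"
          using fin n by (intro Max_ge) (auto intro!: image_eqI[where x=0])
        finally show ?thesis using z by simp
      next
        assume "z \<in> wt c ` Wd n (Suc k) i j"
        then obtain w' where w': "w' \<in> Wd n (Suc k) i j" "z = wt c w'" by auto
        then have "w' \<noteq> []" by (auto simp: Wd_def)
        then obtain w x where wx: "w' = w @ [x]" by (metis rev_exhaust)
        define l where "l = (i + sum_list w) mod n"
        have l: "l < n" using n l_def by simp
        have x: "x < n" using w' wx by (auto simp: Wd_def)
        have jj: "j = (l + x) mod n" using w' wx by (simp add: Wd_def l_def mod_add_left_eq add.assoc)
        have cx: "(j + n - l) mod n = x" using circ_idx[OF l, of x] x jj by simp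
        have wW: "w \<in> Wd n k i l" using w' wx by (auto simp: Wd_def l_def)
        have "z = wt c w * c x" using w' wx by (simp add: wt_def)
        also have "\<dots> \<le> G n c k i l * c x"
          using G_ge[OF wW] c x by (simp add: mult_right_mono)
        also have "\<dots> \<le> Max ((\<lambda>l. G n c k i l * c ((j + n - l) mod n)) ` {..<n})"
          using fin l cx by (intro Max_ge) auto
        finally show ?thesis .
      qed
    qed
    show "mp_pow n (circ n c) (Suc k) i j = G n c (Suc k) i j" using lhs le ge by simp
  qed
qed

lemma reduce:
  assumes n: "n > 0" and c: "\<forall>t<n. 0 \<le> c t \<and> c t \<le> 1"
  shows "set r \<subseteq> {..<n} \<Longrightarrow> \<exists>r'. set r' \<subseteq> {..<n} \<and> length r' \<le> n - 1 \<and> length r' \<le> length r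
     \<and> wt c r \<le> wt c r' \<and> (sum_list r' + (length r - length r') * s) mod n = sum_list r mod n"
proof (induction r rule: length_induct)
  case (1 r)
  show ?case
  proof (cases "length r \<le> n - 1")
    case True
    then show ?thesis using "1.prems" by (intro exI[of _ r]) auto
  next
    case False
    then have lr: "n \<le> length r" by simp
    define Q where "Q p = (sum_list (take p r) + p * ((n - 1) * s)) mod n" for p
    have "Q ` {..n} \<subseteq> {..<n}" using n by (auto simp: Q_def)
    then have "card (Q ` {..n}) \<le> n" by (metis card_lessThan card_mono finite_lessThan)
    then have "card (Q ` {..n}) < card {..n}" by simp
    then have "\<not> inj_on Q {..n}" by (rule pigeonhole)
    then obtain i0 j0 where ij0: "i0 \<le> n" "j0 \<le> n" "Q i0 = Q j0" "i0 \<noteq> j0"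
      unfolding inj_on_def by auto
    obtain i j where ij: "i < j" "j \<le> n" "Q i = Q j"
    proof (cases "i0 < j0")
      case True then show ?thesis using ij0 that by blast
    next
      case False then show ?thesis using ij0 that[of j0 i0] by auto
    qed
    define m where "m = j - i"
    define b where "b = take m (drop i r)"
    have m: "m > 0" "j = i + m" using ij m_def by auto
    have tj: "take j r = take i r @ b" using m by (simp add: b_def take_add)
    have dr: "drop i r = b @ drop j r" using m
      by (metis append_take_drop_id b_def drop_drop add.commute)
    have rr: "r = take i r @ b @ drop j r" using dr by (metis append_take_drop_id)
    define K where "K = (n - 1) * s"
    have "Q j = (sum_list (take i r) + i * K + (sum_list b + m * K)) mod n"
      unfolding Q_def K_def[symmetric] using tj m(2) by (simp add: add_mult_distrib distrib_left ac_simps)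
    moreover have "Q i = (sum_list (take i r) + i * K) mod n" unfolding Q_def K_def ..
    ultimately have "(sum_list (take i r) + i * K + (sum_list b + m * K)) mod n
          = (sum_list (take i r) + i * K) mod n" using ij(3) by simp
    then have "(sum_list b + m * ((n - 1) * s)) mod n = 0" unfolding K_def
      by (metis add_diff_cancel_left' le_add1 mod_eq_dvd_iff_nat dvd_imp_mod_0)
    then have sb: "sum_list b mod n = (m * s) mod n" by (rule m2[OF _ n])
    define r1 where "r1 = take i r @ drop j r"
    have lr1: "length r1 = length r - m" using ij lr m by (simp add: r1_def)
    have "length r1 < length r" using lr1 m ij lr by simp
    moreover have "set r1 \<subseteq> {..<n}" using "1.prems" unfolding r1_def
      using set_take_subset[of i r] set_drop_subset[of j r] by auto
    ultimately obtain r' where r': "set r' \<subseteq> {..<n}" "length r' \<le> n - 1" "length r' \<le> length r1"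
       "wt c r1 \<le> wt c r'" "(sum_list r' + (length r1 - length r') * s) mod n = sum_list r1 mod n"
      using "1.IH" by blast
    have sr: "set r \<subseteq> {..<n}" using "1.prems" .
    have sets: "set (take i r) \<subseteq> {..<n}" "set b \<subseteq> {..<n}" "set (drop j r) \<subseteq> {..<n}"
      using sr rr by (metis Un_subset_iff set_append)+
    have w1: "0 \<le> wt c (take i r)" "0 \<le> wt c (drop j r)" "wt c b \<le> 1"
      using wt_nonneg[OF sets(1)] wt_nonneg[OF sets(3)] wt_le1[OF sets(2)] c by auto
    have "wt c r = wt c (take i r) * wt c b * wt c (drop j r)" by (subst rr) simp
    also have "\<dots> \<le> wt c (take i r) * 1 * wt c (drop j r)"
      using w1 by (intro mult_right_mono mult_left_mono) auto
    also have "\<dots> = wt c r1" by (simp add: r1_def)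
    finally have wr: "wt c r \<le> wt c r'" using r' by simp
    have sumr: "sum_list r = sum_list r1 + sum_list b" by (subst rr) (simp add: r1_def)
    have lens: "length r - length r' = (length r1 - length r') + m" using lr1 r' m ij lr by simp
    have "(sum_list r' + (length r - length r') * s) mod n
        = ((sum_list r' + (length r1 - length r') * s) + m * s) mod n" by (simp add: lens algebra_simps)
    also have "\<dots> = (sum_list r1 + m * s) mod n" using r'(5) by (metis mod_add_left_eq)
    also have "\<dots> = (sum_list r1 + sum_list b) mod n" using sb by (metis mod_add_right_eq)
    finally have "(sum_list r' + (length r - length r') * s) mod n = sum_list r mod n" using sumr by simp
    then show ?thesis using r' wr lr1 by (intro exI[of _ r']) auto
  qed
qed

lemma wt_rep: "c s = 1 \<Longrightarrow> wt c (replicate m s) = 1"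
  by (simp add: wt_def)

lemma G_period:
  assumes n: "n > 0" and c: "\<forall>t<n. 0 \<le> c t \<and> c t \<le> 1" and s: "s < n" "c s = 1"
    and k: "n - 1 \<le> k"
  shows "G n c (k + n) i j = G n c k i j"
proof (rule antisym)
  show "G n c (k + n) i j \<le> G n c k i j" unfolding G_def
  proof (rule Max_cmp[OF finite_Wd finite_Wd])
    fix w assume w: "w \<in> Wd n (k + n) i j"
    then have sw: "set w \<subseteq> {..<n}" by (simp add: Wd_def)
    obtain r' where r': "set r' \<subseteq> {..<n}" "length r' \<le> n - 1" "length r' \<le> length w"
      "wt c w \<le> wt c r'" "(sum_list r' + (length w - length r') * s) mod n = sum_list w mod n"
      using reduce[OF n c sw, of s] by blast
    define w' where "w' = r' @ replicate (k - length r') s"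
    have lw: "length w = k + n" using w by (simp add: Wd_def)
    have e1: "(length w - length r') * s = (k - length r') * s + n * s" using lw r' k
      by (simp add: algebra_simps diff_mult_distrib)
    have "(sum_list w') mod n = (sum_list r' + (k - length r') * s) mod n"
      by (simp add: w'_def sum_list_replicate)
    also have "\<dots> = (sum_list r' + (length w - length r') * s) mod n"
      by (simp add: e1 add.assoc[symmetric])
    also have "\<dots> = sum_list w mod n" using r'(5) .
    finally have "(i + sum_list w') mod n = (i + sum_list w) mod n" by (metis mod_add_right_eq)
    then have "w' \<in> Wd n k i j" using w r' k s by (auto simp: Wd_def w'_def)
    moreover have "wt c w \<le> wt c w'" using r' s by (simp add: w'_def wt_rep)
    ultimately show "\<exists>y\<in>Wd n k i j. wt c w \<le> wt c y" by blast
  qed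
next
  show "G n c k i j \<le> G n c (k + n) i j" unfolding G_def
  proof (rule Max_cmp[OF finite_Wd finite_Wd])
    fix w assume w: "w \<in> Wd n k i j"
    define w' where "w' = w @ replicate n s"
    have "(i + sum_list w') mod n = (i + sum_list w + n * s) mod n"
      by (simp add: w'_def sum_list_replicate add.assoc)
    also have "\<dots> = (i + sum_list w) mod n" by simp
    finally have "w' \<in> Wd n (k + n) i j" using w s by (auto simp: Wd_def w'_def)
    moreover have "wt c w \<le> wt c w'" using s by (simp add: w'_def wt_rep)
    ultimately show "\<exists>y\<in>Wd n (k + n) i j. wt c w \<le> wt c y" by blast
  qed
qed

lemma lambda_circ:
  assumes n: "n > 0" and a: "\<forall>t<n. 0 \<le> a t \<and> a t \<le> M" and s: "s < n" "a s = M"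
  shows "mp_lambda n (circ n a) = M"
proof -
  define C where "C = {xs. xs \<noteq> [] \<and> distinct xs \<and> set xs \<subseteq> {..<n}}"
  have M0: "0 \<le> M" using a s by auto
  have "C \<subseteq> {xs. set xs \<subseteq> {..<n} \<and> length xs \<le> n}"
  proof
    fix xs assume "xs \<in> C"
    then have "distinct xs" "set xs \<subseteq> {..<n}" by (auto simp: C_def)
    then have "card (set xs) \<le> card {..<n}" by (intro card_mono) auto
    then have "length xs \<le> n" using distinct_card[OF \<open>distinct xs\<close>] by simp
    then show "xs \<in> {xs. set xs \<subseteq> {..<n} \<and> length xs \<le> n}" using \<open>set xs \<subseteq> {..<n}\<close> by simp
  qed
  then have finC: "finite C" using finite_lists_length_le[of "{..<n}" n] finite_subset by blast
  have ub: "cycle_gmean (circ n a) xs \<le> M" if "xs \<in> C" for xs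
  proof -
    have ne: "length xs > 0" and sx: "set xs \<subseteq> {..<n}" using that by (auto simp: C_def)
    have "(\<Prod>i<length xs. circ n a (xs ! i) (xs ! ((i + 1) mod length xs))) \<le> (\<Prod>i<length xs. M)"
    proof (rule prod_mono)
      fix i assume "i \<in> {..<length xs}"
      have "((xs ! ((i + 1) mod length xs)) + n - xs ! i) mod n < n" using n by simp
      then show "0 \<le> circ n a (xs ! i) (xs ! ((i + 1) mod length xs)) \<and>
        circ n a (xs ! i) (xs ! ((i + 1) mod length xs)) \<le> M" using a by (simp add: circ_def)
    qed
    then have "cycle_gmean (circ n a) xs \<le> root (length xs) (M ^ length xs)"
      unfolding cycle_gmean_def using ne by simp
    also have "\<dots> = M" using ne M0 by (simp add: real_root_power_cancel)
    finally show ?thesis .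
  qed
  define p where "p = (LEAST p. 0 < p \<and> (p * s) mod n = 0)"
  have pex: "0 < n \<and> (n * s) mod n = 0" using n by simp
  have p: "0 < p" "(p * s) mod n = 0" using LeastI[of "\<lambda>p. 0 < p \<and> (p * s) mod n = 0", OF pex]
    by (auto simp: p_def)
  have pmin: "\<not> (0 < q \<and> (q * s) mod n = 0)" if "q < p" for q
    using not_less_Least[of q "\<lambda>p. 0 < p \<and> (p * s) mod n = 0"] that by (simp add: p_def)
  define xs where "xs = map (\<lambda>i. (i * s) mod n) [0..<p]"
  have inj: "inj_on (\<lambda>i. (i * s) mod n) {0..<p}"
  proof (rule linorder_inj_onI')
    fix i j assume ij0: "i \<in> {0..<p}" "j \<in> {0..<p}" "i < j"
    show "(i * s) mod n \<noteq> (j * s) mod n"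
    proof
    assume "(i * s) mod n = (j * s) mod n"
    then have ij: "i < j" "i \<in> {0..<p}" "j \<in> {0..<p}" "(i * s) mod n = (j * s) mod n" using ij0 by auto
    have "i * s \<le> j * s" using ij by simp
    then have "n dvd (j * s - i * s)" using ij(4) mod_eq_dvd_iff_nat[of "i * s" "j * s" n] by simp
    then have "((j - i) * s) mod n = 0" by (simp add: diff_mult_distrib)
    moreover have "j - i < p" "0 < j - i" using ij by auto
    ultimately show False using pmin[of "j - i"] by simp
  qed
  qed
  have "distinct xs" unfolding xs_def distinct_map using inj by simp
  moreover have "xs \<noteq> []" using p by (simp add: xs_def)
  moreover have "set xs \<subseteq> {..<n}" using n by (auto simp: xs_def)
  ultimately have xsC: "xs \<in> C" by (simp add: C_def)
  have lx: "length xs = p" by (simp add: xs_def)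
  have edge: "circ n a (xs ! i) (xs ! ((i + 1) mod p)) = M" if i: "i < p" for i
  proof -
    have e1: "xs ! i = (i * s) mod n" using i by (simp add: xs_def)
    have e2: "xs ! ((i + 1) mod p) = ((i * s) mod n + s) mod n"
    proof (cases "i + 1 < p")
      case True
      then show ?thesis by (simp add: xs_def mod_add_right_eq add.commute)
    next
      case False
      then have "i + 1 = p" using i by simp
      then have pS: "p = Suc i" by simp
      have "p * s = i * s + s" unfolding pS by simp
      then have "((i * s) mod n + s) mod n = (p * s) mod n" by (simp add: mod_add_left_eq)
      then show ?thesis using p \<open>i + 1 = p\<close> by (simp add: xs_def)
    qed
    have "(((i * s) mod n + s) mod n + n - (i * s) mod n) mod n = s mod n"
      by (rule circ_idx) (simp add: n)
    then show ?thesis using e1 e2 s by (simp add: circ_def)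
  qed
  have "cycle_gmean (circ n a) xs = root p (\<Prod>i<p. M)"
    unfolding cycle_gmean_def lx using edge by simp
  also have "\<dots> = M" using p M0 by (simp add: real_root_power_cancel)
  finally have lb: "cycle_gmean (circ n a) xs = M" .
  show ?thesis unfolding mp_lambda_def C_def[symmetric]
  proof (rule antisym)
    show "Max (cycle_gmean (circ n a) ` C) \<le> M"
      using finC xsC ub by (subst Max_le_iff) auto
    show "M \<le> Max (cycle_gmean (circ n a) ` C)"
    proof -
      have "cycle_gmean (circ n a) xs \<in> cycle_gmean (circ n a) ` C" using xsC by simp
      then show ?thesis using finC lb by (simp add: Max_ge)
    qed
  qed
qed


theorem proposition3:
  fixes n :: nat and a :: "nat \<Rightarrow> real"
  assumes nonneg: "\<forall>t<n. a t \<ge> 0"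
    and nonzero: "\<exists>t<n. a t \<noteq> 0"
  shows "ult_periodic n (circ n a) \<and> transient n (circ n a) \<le> (n - 1)^2 + 1"
proof -
  obtain t0 where t0: "t0 < n" "a t0 \<noteq> 0" using nonzero by blast
  have n: "n > 0" using t0 by simp
  define M where "M = Max (a ` {..<n})"
  have finA: "finite (a ` {..<n})" "a ` {..<n} \<noteq> {}" using n by auto
  have aM: "\<forall>t<n. 0 \<le> a t \<and> a t \<le> M" using nonneg finA by (auto simp: M_def)
  have "M \<in> a ` {..<n}" unfolding M_def using finA by (rule Max_in)
  then obtain s where s: "s < n" "a s = M" by auto
  have M0: "M > 0"
  proof -
    have "0 \<le> a t0" "a t0 \<le> M" using aM t0 by auto
    then show ?thesis using t0(2) by linarith
  qed
  have lam: "mp_lambda n (circ n a) = M" using lambda_circ[OF n aM s] .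
  define c where "c t = a t / M" for t
  have sc: "mat_scale (1 / mp_lambda n (circ n a)) (circ n a) = circ n c"
    by (rule ext, rule ext) (simp add: lam mat_scale_def circ_def c_def)
  have np: "normpow n (circ n a) t = mp_pow n (circ n c) t" for t
    by (simp add: normpow_def sc)
  have cb: "\<forall>t<n. 0 \<le> c t \<and> c t \<le> 1" using aM M0 by (simp add: c_def)
  have cs: "c s = 1" using s M0 by (simp add: c_def)
  have c0: "\<forall>t<n. 0 \<le> c t" using cb by simp
  define T0 where "T0 = max 1 (n - 1)"
  have per: "periodic_from n (circ n a) T0"
    unfolding periodic_from_def
  proof (intro conjI exI[of _ n] allI impI)
    show "1 \<le> T0" by (simp add: T0_def)
    show "0 < n" using n .
    fix t i j assume t: "T0 \<le> t" and i: "i < n" and j: "j < n"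
    have k: "n - 1 \<le> t" using t by (simp add: T0_def)
    show "normpow n (circ n a) (t + n) i j = normpow n (circ n a) t i j"
      unfolding np using powG[OF n i c0] j G_period[OF n cb s(1) cs k] by simp
  qed
  have "transient n (circ n a) \<le> T0" unfolding transient_def by (rule Least_le) (rule per)
  moreover have "T0 \<le> (n - 1)^2 + 1"
  proof -
    have h: "n - 1 \<le> (n - 1) * (n - 1)" by (cases "n - 1") auto
    have "n - 1 \<le> (n - 1)^2 + 1" unfolding power2_eq_square using h by linarith
    then show ?thesis unfolding T0_def by simp
  qed
  ultimately show ?thesis using per by (auto simp: ult_periodic_def)
qed

end
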